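(* Let $X_1,X_2,\dots$ be i.i.d. real random variables with mean $\mu\ge0$, variance $\sigma^2>0$, and $\delta:=\mathbb{P}(X_1\ge1)>0$. Let $S_0=0$ and $S_k=X_1+\dots+X_k$. Then for every $N\ge1$, \[ \mathbb{P}\big(S_k\ge0\text{ for }k=1,2,\dots,N\big)\le\frac{4\sigma}{\delta\sqrt N}+\frac{\mu}{\delta}. \] *)

theory Defs
  imports "HOL-Probability.Probability"
begin

end

theory Submission
  imports Defs
begin


primrec runmax :: "(nat \<Rightarrow> real) \<Rightarrow> nat \<Rightarrow> real" where
  "runmax y 0 = y 0"
| "runmax y (Suc n) = max (runmax y n) (y (Suc n))"

lemma runmax_cong: "(\<And>k. k \<le> n \<Longrightarrow> y k = y' k) \<Longrightarrow> runmax y n = runmax y' n"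
  by (induction n) auto

lemma borel_measurable_runmax[measurable]:
  assumes [measurable]: "\<And>k. (\<lambda>x. h k x) \<in> borel_measurable M"
  shows "(\<lambda>x. runmax (\<lambda>k. h k x) n) \<in> borel_measurable M"
  by (induction n) auto

lemma integrable_runmax:
  assumes "\<And>k. integrable M (\<lambda>x. h k x)"
  shows "integrable M (\<lambda>x. runmax (\<lambda>k. h k x) n)"
  using assms by (induction n) auto

definition Q :: "nat \<Rightarrow> (nat \<Rightarrow> real) \<Rightarrow> real" where
  "Q L f = of_bool (\<forall>j\<in>{1..L}. (\<Sum>i<j. f i) \<ge> 0)"

lemma Q_cong: "(\<And>i. i < L \<Longrightarrow> f i = g i) \<Longrightarrow> Q L f = Q L g"
proof -
  assume a: "\<And>i. i < L \<Longrightarrow> f i = g i"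
  have "\<And>j. j \<in> {1..L} \<Longrightarrow> (\<Sum>i<j. f i) = (\<Sum>i<j. g i)"
    by (rule sum.cong) (auto intro: a)
  then show ?thesis unfolding Q_def by auto
qed

lemma component_measurable_notin:
  fixes k :: nat and J :: "nat set"
  assumes False: "k \<notin> J"
  shows "(\<lambda>f. f k) \<in> borel_measurable (PiM J (\<lambda>_. borel :: real measure))"
  unfolding measurable_def
proof safe
  fix f assume "f \<in> space (PiM J (\<lambda>_. borel :: real measure))"
  then show "f k \<in> space borel" by simp
next
  fix A :: "real set" assume "A \<in> sets borel"
  have "(\<lambda>f. f k) -` A \<inter> space (PiM J (\<lambda>_. borel :: real measure)) = (if undefined \<in> A then space (PiM J (\<lambda>_. borel :: real measure)) else {})"
    using False by (auto simp: space_PiM PiE_def extensional_def)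
  then show "(\<lambda>f. f k) -` A \<inter> space (PiM J (\<lambda>_. borel :: real measure)) \<in> sets (PiM J (\<lambda>_. borel :: real measure))"
    by simp
qed

lemma component_measurable_any[measurable]:
  fixes k :: nat and J :: "nat set"
  shows "(\<lambda>f. f k) \<in> borel_measurable (PiM J (\<lambda>_. borel :: real measure))"
  by (cases "k \<in> J") (auto intro: component_measurable_notin)

lemma Q_measurable[measurable]:
  "(\<lambda>f. Q L (\<lambda>i. f (n + i))) \<in> borel_measurable (PiM J (\<lambda>_. borel :: real measure))"
  unfolding Q_def by measurable

lemma Q_bounded: "norm (Q L f) \<le> 1"
  by (simp add: Q_def)




lemma runmax_ge: "k \<le> n \<Longrightarrow> y k \<le> runmax y n"
  by (induction n) (auto simp: le_Suc_eq max.coboundedI1)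

lemma doob_path:
  fixes \<xi> :: "nat \<Rightarrow> real"
  defines "y \<equiv> \<lambda>k. \<Sum>i<k. \<xi> i"
  shows "runmax y N * y N - (\<Sum>i<N. runmax y i * \<xi> i) - (runmax y N)\<^sup>2 / 2 \<ge> 0"
proof (induction N)
  case 0
  then show ?case by (simp add: y_def)
next
  case (Suc N)
  let ?m = "runmax y N" and ?y = "y (Suc N)"
  have ys: "y (Suc N) = y N + \<xi> N" by (simp add: y_def)
  have step: "max ?m ?y * ?y - ?m * y N - ?m * \<xi> N - ((max ?m ?y)\<^sup>2 - ?m\<^sup>2)/2 \<ge> 0"
  proof (cases "?y \<le> ?m")
    case True then show ?thesis using ys by (simp add: algebra_simps)
  next
    case False
    then have mx: "max ?m ?y = ?y" by simp
    have eq: "?y * ?y - ?m * y N - ?m * \<xi> N - (?y\<^sup>2 - ?m\<^sup>2)/2 = (?y - ?m)\<^sup>2/2"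
      unfolding ys by (simp add: field_simps power2_eq_square)
    show ?thesis unfolding mx eq by simp
  qed
  have "runmax y (Suc N) * y (Suc N) - (\<Sum>i<Suc N. runmax y i * \<xi> i) - (runmax y (Suc N))\<^sup>2 / 2
     = (?m * y N - (\<Sum>i<N. runmax y i * \<xi> i) - ?m\<^sup>2/2)
       + (max ?m ?y * ?y - ?m * y N - ?m * \<xi> N - ((max ?m ?y)\<^sup>2 - ?m\<^sup>2)/2)"
    by (simp add: field_simps)
  then show ?case using Suc.IH step by linarith
qed

lemma sq_path:
  fixes \<xi> :: "nat \<Rightarrow> real"
  shows "(\<Sum>i<N. \<xi> i)\<^sup>2 = (\<Sum>i<N. (\<xi> i)\<^sup>2 + 2 * (\<Sum>j<i. \<xi> j) * \<xi> i)"
  by (induction N) (simp_all add: algebra_simps power2_eq_square)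

lemma max_path:
  fixes \<xi> :: "nat \<Rightarrow> real" and a :: real
  defines "y \<equiv> \<lambda>k. \<Sum>i<k. \<xi> i"
  assumes a: "a > 0"
  shows "runmax y N \<le> a + (\<Sum>i<N. (\<xi> i)\<^sup>2 + (2 * y i - runmax y i) * \<xi> i) / a"
proof -
  let ?m = "runmax y N"
  have D: "?m * y N - (\<Sum>i<N. runmax y i * \<xi> i) - ?m\<^sup>2 / 2 \<ge> 0"
    using doob_path[where \<xi>=\<xi> and N=N] by (simp add: y_def)
  have T: "(\<Sum>i<N. (\<xi> i)\<^sup>2 + (2 * y i - runmax y i) * \<xi> i) = (y N)\<^sup>2 - (\<Sum>i<N. runmax y i * \<xi> i)"
    using sq_path[where \<xi>=\<xi> and N=N] by (simp add: y_def sum.distrib sum_subtractf algebra_simps)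
  have "(y N)\<^sup>2 - (\<Sum>i<N. runmax y i * \<xi> i) \<ge> ?m\<^sup>2/4"
  proof -
    have "(y N - ?m/2)\<^sup>2 \<ge> 0" by simp
    then show ?thesis using D by (simp add: power2_eq_square algebra_simps)
  qed
  moreover have "?m \<le> a + ?m\<^sup>2/(4*a)"
  proof -
    have "(?m - 2*a)\<^sup>2 \<ge> 0" by simp
    then have "4*a*?m \<le> 4*a*a + ?m\<^sup>2" by (simp add: power2_eq_square algebra_simps)
    then show ?thesis using a by (simp add: field_simps)
  qed
  moreover have "?m\<^sup>2/(4*a) = (?m\<^sup>2/4)/a" by simp
  ultimately have "?m\<^sup>2/(4*a) \<le> ((y N)\<^sup>2 - (\<Sum>i<N. runmax y i * \<xi> i)) / a"
    using a divide_right_mono by (metis less_eq_real_def)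
  with \<open>?m \<le> a + ?m\<^sup>2/(4*a)\<close> show ?thesis unfolding T by linarith
qed




lemma sum_shift_diff:
  fixes z :: "nat \<Rightarrow> real"
  shows "(\<Sum>i<j. z (n+i)) = (\<Sum>i<n+j. z i) - (\<Sum>i<n. z i)"
  by (induction j) (simp_all add: algebra_simps)

lemma count_path:
  fixes z :: "nat \<Rightarrow> real"
  defines "s \<equiv> \<lambda>k. \<Sum>i<k. z i"
  assumes c: "\<And>k. k \<le> N \<Longrightarrow> - s k \<le> c"
  shows "(\<Sum>n\<in>{1..N}. of_bool (z (n-1) \<ge> 1) * of_bool (\<forall>j\<in>{1..N-n}. (\<Sum>i<j. z (n+i)) \<ge> 0)) \<le> s N + c"
proof -
  define R where "R j = Min (s ` {j..N})" for j
  define ind where "ind n = (of_bool (z (n-1) \<ge> 1) * of_bool (\<forall>j\<in>{1..N-n}. (\<Sum>i<j. z (n+i)) \<ge> 0) :: real)" for n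
  have claim: "j \<le> N \<Longrightarrow> (\<Sum>n\<in>{1..j}. ind n) \<le> R j - R 0" for j
  proof (induction j)
    case 0 then show ?case by simp
  next
    case (Suc j)
    then have jN: "j < N" by simp
    have Rj: "R j = min (s j) (R (Suc j))"
    proof -
      have "{j..N} = insert j {Suc j..N}" using jN by auto
      then show ?thesis unfolding R_def using jN by (simp add: Min_insert)
    qed
    have "ind (Suc j) \<le> R (Suc j) - R j"
    proof (cases "z j \<ge> 1 \<and> (\<forall>k\<in>{1..N-Suc j}. (\<Sum>i<k. z (Suc j+i)) \<ge> 0)")
      case True
      have "R (Suc j) = s (Suc j)"
        unfolding R_def
      proof (rule Min_eqI)
        fix y assume "y \<in> s ` {Suc j..N}"
        then obtain k where k: "k \<in> {Suc j..N}" "y = s k" by auto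
        show "s (Suc j) \<le> y"
        proof (cases "k = Suc j")
          case False
          then have "k - Suc j \<in> {1..N - Suc j}" using k by auto
          with True have "(\<Sum>i<k - Suc j. z (Suc j+i)) \<ge> 0" by blast
          moreover have "(\<Sum>i<k - Suc j. z (Suc j+i)) = s k - s (Suc j)"
            using sum_shift_diff[where z=z and n="Suc j" and j="k - Suc j"] k
            unfolding s_def by (simp del: sum.lessThan_Suc)
          ultimately show ?thesis using k by simp
        qed (simp add: k)
      qed (use jN in auto)
      moreover have "s (Suc j) = s j + z j" by (simp add: s_def)
      ultimately have "R j \<le> R (Suc j) - 1" using Rj True by linarith
      then show ?thesis unfolding ind_def using True by simp
    next
      case False
      then have "ind (Suc j) = 0" unfolding ind_def by auto
      then show ?thesis using Rj by simp
    qed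
    moreover have "(\<Sum>n\<in>{1..Suc j}. ind n) = (\<Sum>n\<in>{1..j}. ind n) + ind (Suc j)"
      by simp
    ultimately show ?case using Suc by simp
  qed
  have "R N = s N" unfolding R_def by simp
  moreover have "R 0 \<ge> - c"
    unfolding R_def using c by (auto intro!: Min.boundedI simp: minus_le_iff)
  ultimately show ?thesis using claim[of N] unfolding ind_def by simp
qed




locale iid = prob_space M for M :: "'a measure" +
  fixes X :: "nat \<Rightarrow> 'a \<Rightarrow> real"
  assumes rv[measurable]: "\<And>i. X i \<in> borel_measurable M"
    and indep: "indep_vars (\<lambda>_. borel) X UNIV"
    and ident: "\<And>i. distr M borel (X i) = distr M borel (X 0)"
    and sq_int: "integrable M (\<lambda>\<omega>. (X 0 \<omega>)\<^sup>2)"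
begin

lemma transfer_integral:
  assumes [measurable]: "f \<in> borel_measurable (borel :: real measure)"
  shows "integral\<^sup>L M (\<lambda>\<omega>. f (X i \<omega>)) = integral\<^sup>L M (\<lambda>\<omega>. (f (X 0 \<omega>) :: real))"
proof -
  have "integral\<^sup>L M (\<lambda>\<omega>. f (X i \<omega>)) = integral\<^sup>L (distr M borel (X i)) f"
    by (simp add: integral_distr)
  also have "\<dots> = integral\<^sup>L (distr M borel (X 0)) f" by (simp add: ident[of i])
  also have "\<dots> = integral\<^sup>L M (\<lambda>\<omega>. f (X 0 \<omega>))" by (simp add: integral_distr)
  finally show ?thesis .
qed

lemma transfer_integrable:
  assumes [measurable]: "f \<in> borel_measurable (borel :: real measure)"
  shows "integrable M (\<lambda>\<omega>. f (X i \<omega>) :: real) \<longleftrightarrow> integrable M (\<lambda>\<omega>. f (X 0 \<omega>))"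
proof -
  have "integrable M (\<lambda>\<omega>. f (X i \<omega>)) \<longleftrightarrow> integrable (distr M borel (X i)) f"
    by (simp add: integrable_distr_eq)
  also have "\<dots> \<longleftrightarrow> integrable (distr M borel (X 0)) f" by (simp add: ident[of i])
  also have "\<dots> \<longleftrightarrow> integrable M (\<lambda>\<omega>. f (X 0 \<omega>))" by (simp add: integrable_distr_eq)
  finally show ?thesis .
qed

lemma int_X0: "integrable M (X 0)"
  by (rule square_integrable_imp_integrable[OF rv sq_int])

lemma int_X: "integrable M (X i)"
  using transfer_integrable[of "\<lambda>x. x" i] int_X0 by simp

lemma int_sq: "integrable M (\<lambda>\<omega>. (c - X i \<omega>)\<^sup>2)"
proof -
  have "integrable M (\<lambda>\<omega>. c\<^sup>2 - 2 * c * X 0 \<omega> + (X 0 \<omega>)\<^sup>2)"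
    using int_X0 sq_int by auto
  then have "integrable M (\<lambda>\<omega>. (c - X 0 \<omega>)\<^sup>2)"
    by (simp add: power2_diff algebra_simps)
  then show ?thesis
    using transfer_integrable[of "\<lambda>x. (c - x)\<^sup>2" i] by simp
qed

lemma block_indep:
  assumes "i \<notin> J" and [measurable]: "f \<in> borel_measurable (borel :: real measure)"
    and [measurable]: "g \<in> borel_measurable (PiM J (\<lambda>_. borel :: real measure))"
  shows "indep_var borel (\<lambda>\<omega>. f (X i \<omega>) :: real) borel (\<lambda>\<omega>. g (\<lambda>j\<in>J. X j \<omega>) :: real)"
proof -
  have "indep_var (PiM {i} (\<lambda>_. borel)) (\<lambda>\<omega>. \<lambda>j\<in>{i}. X j \<omega>) (PiM J (\<lambda>_. borel)) (\<lambda>\<omega>. \<lambda>j\<in>J. X j \<omega>)"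
    by (rule indep_var_restrict[OF indep]) (use assms(1) in auto)
  moreover have "(\<lambda>h. f (h i)) \<in> borel_measurable (PiM {i} (\<lambda>_. borel :: real measure))"
    by measurable
  ultimately have "indep_var borel ((\<lambda>h. f (h i)) \<circ> (\<lambda>\<omega>. \<lambda>j\<in>{i}. X j \<omega>)) borel (g \<circ> (\<lambda>\<omega>. \<lambda>j\<in>J. X j \<omega>))"
    by (intro indep_var_compose) auto
  then show ?thesis by (simp add: comp_def)
qed

lemma shift_distr:
  assumes "L > 0"
  shows "distr M (PiM {..<L} (\<lambda>_. borel)) (\<lambda>\<omega>. \<lambda>i\<in>{..<L}. X (n+i) \<omega>) = PiM {..<L} (\<lambda>_. distr M borel (X 0))"
proof -
  let ?K = "{n..<n+L}"
  let ?D = "distr M borel (X 0)"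
  have DP: "prob_space ?D" by (rule prob_space_distr) simp
  have indK: "indep_vars (\<lambda>_. borel) X ?K" by (rule indep_vars_subset[OF indep]) simp
  have dK: "distr M (PiM ?K (\<lambda>_. borel)) (\<lambda>\<omega>. \<lambda>i\<in>?K. X i \<omega>) = PiM ?K (\<lambda>_. ?D)"
  proof -
    have "distr M (PiM ?K (\<lambda>_. borel)) (\<lambda>\<omega>. \<lambda>i\<in>?K. X i \<omega>) = PiM ?K (\<lambda>i. distr M borel (X i))"
      using indep_vars_iff_distr_eq_PiM[where I="?K" and M'="\<lambda>_. borel" and X=X] indK assms by simp
    also have "\<dots> = PiM ?K (\<lambda>_. ?D)" by (rule PiM_cong) (auto intro: ident)
    finally show ?thesis .
  qed
  have "distr M (PiM {..<L} (\<lambda>_. borel)) (\<lambda>\<omega>. \<lambda>i\<in>{..<L}. X (n+i) \<omega>)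
      = distr M (PiM {..<L} (\<lambda>_. borel)) ((\<lambda>f. \<lambda>i\<in>{..<L}. f (n+i)) \<circ> (\<lambda>\<omega>. \<lambda>i\<in>?K. X i \<omega>))"
    by (rule distr_cong) (auto simp: comp_def)
  also have "\<dots> = distr (distr M (PiM ?K (\<lambda>_. borel)) (\<lambda>\<omega>. \<lambda>i\<in>?K. X i \<omega>)) (PiM {..<L} (\<lambda>_. borel)) (\<lambda>f. \<lambda>i\<in>{..<L}. f (n+i))"
    by (rule distr_distr[symmetric]) measurable
  also have "\<dots> = distr (PiM ?K (\<lambda>_. ?D)) (PiM {..<L} (\<lambda>_. ?D)) (\<lambda>f. \<lambda>i\<in>{..<L}. f (n+i))"
    unfolding dK by (rule distr_cong) (auto intro!: sets_PiM_cong)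
  also have "\<dots> = PiM {..<L} (\<lambda>_. ?D)"
    using distr_PiM_reindex[of ?K "\<lambda>_. ?D" "\<lambda>i. n + i" "{..<L}"] DP by auto
  finally show ?thesis .
qed

lemma shift_integral:
  assumes [measurable]: "h \<in> borel_measurable (PiM {..<L} (\<lambda>_. borel :: real measure))"
  shows "integral\<^sup>L M (\<lambda>\<omega>. h (\<lambda>i\<in>{..<L}. X (n+i) \<omega>) :: real) = integral\<^sup>L M (\<lambda>\<omega>. h (\<lambda>i\<in>{..<L}. X i \<omega>))"
proof (cases "L = 0")
  case True then show ?thesis by (simp add: restrict_def)
next
  case False
  have "integral\<^sup>L M (\<lambda>\<omega>. h (\<lambda>i\<in>{..<L}. X (n+i) \<omega>)) = integral\<^sup>L (distr M (PiM {..<L} (\<lambda>_. borel)) (\<lambda>\<omega>. \<lambda>i\<in>{..<L}. X (n+i) \<omega>)) h"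
    by (rule integral_distr[symmetric]) measurable
  also have "\<dots> = integral\<^sup>L (distr M (PiM {..<L} (\<lambda>_. borel)) (\<lambda>\<omega>. \<lambda>i\<in>{..<L}. X (0+i) \<omega>)) h"
    using shift_distr[of L n] shift_distr[of L 0] False by simp
  also have "\<dots> = integral\<^sup>L M (\<lambda>\<omega>. h (\<lambda>i\<in>{..<L}. X i \<omega>))"
    by (subst integral_distr) auto
  finally show ?thesis .
qed

end



lemma Q_measurable0[measurable]:
  "(\<lambda>f. Q L f) \<in> borel_measurable (PiM J (\<lambda>_. borel :: real measure))"
  using Q_measurable[of L 0 J] by simp

lemma Q_mono: "L \<le> N \<Longrightarrow> Q N f \<le> Q L f"
  by (auto simp: Q_def)

context iid begin

lemma bounded_integrable:
  assumes [measurable]: "f \<in> borel_measurable M" and "\<And>\<omega>. \<bar>f \<omega>\<bar> \<le> (1::real)"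
  shows "integrable M f"
  by (rule integrable_const_bound[where B=1]) (use assms in auto)

lemma of_bool_prob:
  assumes [measurable]: "Measurable.pred M P"
  shows "integral\<^sup>L M (\<lambda>\<omega>. of_bool (P \<omega>) :: real) = prob {\<omega>\<in>space M. P \<omega>}"
proof -
  have "integral\<^sup>L M (\<lambda>\<omega>. of_bool (P \<omega>) :: real) = integral\<^sup>L M (indicator {\<omega>\<in>space M. P \<omega>})"
    by (rule Bochner_Integration.integral_cong[OF refl]) (auto simp: indicator_def)
  also have "\<dots> = prob {\<omega>\<in>space M. P \<omega>}"
    by (simp add: Int_absorb2)
  finally show ?thesis .
qed

lemma stepA:
  assumes n: "n \<in> {1..N}"
  shows "integral\<^sup>L M (\<lambda>\<omega>. of_bool (1 \<le> X (n-1) \<omega>) * Q (N-n) (\<lambda>i. X (n+i) \<omega>))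
     \<ge> prob {\<omega>\<in>space M. 1 \<le> X 0 \<omega>} * integral\<^sup>L M (\<lambda>\<omega>. Q N (\<lambda>i. X i \<omega>))"
proof -
  let ?J = "{n..<N}"
  let ?f = "\<lambda>x::real. of_bool (1 \<le> x) :: real"
  let ?g = "\<lambda>h. Q (N-n) (\<lambda>i. h (n+i))"
  have [measurable]: "?f \<in> borel_measurable borel" by measurable
  have gm[measurable]: "?g \<in> borel_measurable (PiM ?J (\<lambda>_. borel :: real measure))" by measurable
  have eqg: "?g (\<lambda>j\<in>?J. X j \<omega>) = Q (N-n) (\<lambda>i. X (n+i) \<omega>)" for \<omega>
    by (rule Q_cong) auto
  have ind: "indep_var borel (\<lambda>\<omega>. ?f (X (n-1) \<omega>)) borel (\<lambda>\<omega>. ?g (\<lambda>j\<in>?J. X j \<omega>))"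
    by (rule block_indep) (use n in auto)
  have i1: "integrable M (\<lambda>\<omega>. ?f (X (n-1) \<omega>))"
    by (rule bounded_integrable) auto
  have i2: "integrable M (\<lambda>\<omega>. ?g (\<lambda>j\<in>?J. X j \<omega>))"
    by (rule bounded_integrable) (auto simp: Q_def)
  have "integral\<^sup>L M (\<lambda>\<omega>. of_bool (1 \<le> X (n-1) \<omega>) * Q (N-n) (\<lambda>i. X (n+i) \<omega>))
      = integral\<^sup>L M (\<lambda>\<omega>. ?f (X (n-1) \<omega>) * ?g (\<lambda>j\<in>?J. X j \<omega>))"
    by (simp only: eqg)
  also have "\<dots> = integral\<^sup>L M (\<lambda>\<omega>. ?f (X (n-1) \<omega>)) * integral\<^sup>L M (\<lambda>\<omega>. ?g (\<lambda>j\<in>?J. X j \<omega>))"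
    by (rule indep_var_lebesgue_integral[OF ind i1 i2])
  also have "integral\<^sup>L M (\<lambda>\<omega>. ?f (X (n-1) \<omega>)) = prob {\<omega>\<in>space M. 1 \<le> X 0 \<omega>}"
    using transfer_integral[of ?f "n-1"] of_bool_prob[of "\<lambda>\<omega>. 1 \<le> X 0 \<omega>"] by simp
  moreover have "integral\<^sup>L M (\<lambda>\<omega>. ?g (\<lambda>j\<in>?J. X j \<omega>)) \<ge> integral\<^sup>L M (\<lambda>\<omega>. Q N (\<lambda>i. X i \<omega>))"
  proof -
    have "integral\<^sup>L M (\<lambda>\<omega>. ?g (\<lambda>j\<in>?J. X j \<omega>)) = integral\<^sup>L M (\<lambda>\<omega>. Q (N-n) (\<lambda>i\<in>{..<N-n}. X (n+i) \<omega>))"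
      by (intro Bochner_Integration.integral_cong[OF refl] Q_cong) auto
    also have "\<dots> = integral\<^sup>L M (\<lambda>\<omega>. Q (N-n) (\<lambda>i\<in>{..<N-n}. X i \<omega>))"
      by (rule shift_integral) measurable
    also have "\<dots> = integral\<^sup>L M (\<lambda>\<omega>. Q (N-n) (\<lambda>i. X i \<omega>))"
      by (intro Bochner_Integration.integral_cong[OF refl] Q_cong) auto
    finally have e: "integral\<^sup>L M (\<lambda>\<omega>. ?g (\<lambda>j\<in>?J. X j \<omega>)) = integral\<^sup>L M (\<lambda>\<omega>. Q (N-n) (\<lambda>i. X i \<omega>))" .
    have "integral\<^sup>L M (\<lambda>\<omega>. Q N (\<lambda>i. X i \<omega>)) \<le> integral\<^sup>L M (\<lambda>\<omega>. Q (N-n) (\<lambda>i. X i \<omega>))"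
      by (intro integral_mono Q_mono bounded_integrable) (auto simp: Q_def)
    then show ?thesis using e by simp
  qed
  ultimately show ?thesis
    using mult_left_mono[OF _ measure_nonneg[of M "{\<omega>\<in>space M. 1 \<le> X 0 \<omega>}"]] by auto
qed

end



context iid begin

lemma cross_term:
  fixes \<mu> :: real
  assumes mu: "\<mu> = expectation (X 0)"
  shows "integrable M (\<lambda>\<omega>. (2 * (\<Sum>l<i. \<mu> - X l \<omega>) - runmax (\<lambda>k. \<Sum>l<k. \<mu> - X l \<omega>) i) * (\<mu> - X i \<omega>))"
    and "integral\<^sup>L M (\<lambda>\<omega>. (2 * (\<Sum>l<i. \<mu> - X l \<omega>) - runmax (\<lambda>k. \<Sum>l<k. \<mu> - X l \<omega>) i) * (\<mu> - X i \<omega>)) = 0"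
proof -
  let ?J = "{..<i}"
  let ?f = "\<lambda>x::real. \<mu> - x"
  let ?g = "\<lambda>h. 2 * (\<Sum>l<i. \<mu> - h l) - runmax (\<lambda>k. \<Sum>l<k. \<mu> - h l) i"
  have [measurable]: "?f \<in> borel_measurable borel" by measurable
  have [measurable]: "?g \<in> borel_measurable (PiM ?J (\<lambda>_. borel :: real measure))" by measurable
  have eqg: "?g (\<lambda>j\<in>?J. X j \<omega>) = 2 * (\<Sum>l<i. \<mu> - X l \<omega>) - runmax (\<lambda>k. \<Sum>l<k. \<mu> - X l \<omega>) i" for \<omega>
  proof -
    have "(\<Sum>l<i. \<mu> - (\<lambda>j\<in>?J. X j \<omega>) l) = (\<Sum>l<i. \<mu> - X l \<omega>)" by (rule sum.cong) auto
    moreover have "runmax (\<lambda>k. \<Sum>l<k. \<mu> - (\<lambda>j\<in>?J. X j \<omega>) l) i = runmax (\<lambda>k. \<Sum>l<k. \<mu> - X l \<omega>) i"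
      by (rule runmax_cong, rule sum.cong) auto
    ultimately show ?thesis by simp
  qed
  have ind: "indep_var borel (\<lambda>\<omega>. ?f (X i \<omega>)) borel (\<lambda>\<omega>. ?g (\<lambda>j\<in>?J. X j \<omega>))"
    by (rule block_indep) auto
  have i1: "integrable M (\<lambda>\<omega>. ?f (X i \<omega>))" using int_X by auto
  have i2: "integrable M (\<lambda>\<omega>. ?g (\<lambda>j\<in>?J. X j \<omega>))"
    unfolding eqg using int_X by (auto intro!: integrable_runmax)
  have e: "(\<lambda>\<omega>. (2 * (\<Sum>l<i. \<mu> - X l \<omega>) - runmax (\<lambda>k. \<Sum>l<k. \<mu> - X l \<omega>) i) * (\<mu> - X i \<omega>))
     = (\<lambda>\<omega>. ?f (X i \<omega>) * ?g (\<lambda>j\<in>?J. X j \<omega>))"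
    unfolding eqg by (simp add: mult.commute)
  show "integrable M (\<lambda>\<omega>. (2 * (\<Sum>l<i. \<mu> - X l \<omega>) - runmax (\<lambda>k. \<Sum>l<k. \<mu> - X l \<omega>) i) * (\<mu> - X i \<omega>))"
    unfolding e by (rule indep_var_integrable[OF ind i1 i2])
  have "integral\<^sup>L M (\<lambda>\<omega>. ?f (X i \<omega>)) = 0"
  proof -
    have "integral\<^sup>L M (\<lambda>\<omega>. ?f (X i \<omega>)) = integral\<^sup>L M (\<lambda>\<omega>. ?f (X 0 \<omega>))"
      by (rule transfer_integral) measurable
    also have "\<dots> = \<mu> - expectation (X 0)" using int_X0 prob_space by simp
    finally show ?thesis using mu by simp
  qed
  then show "integral\<^sup>L M (\<lambda>\<omega>. (2 * (\<Sum>l<i. \<mu> - X l \<omega>) - runmax (\<lambda>k. \<Sum>l<k. \<mu> - X l \<omega>) i) * (\<mu> - X i \<omega>)) = 0"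
    unfolding e indep_var_lebesgue_integral[OF ind i1 i2] by simp
qed

lemma sq_term:
  fixes \<mu> :: real
  assumes mu: "\<mu> = expectation (X 0)"
  shows "integral\<^sup>L M (\<lambda>\<omega>. (\<mu> - X i \<omega>)\<^sup>2) = variance (X 0)"
proof -
  have "integral\<^sup>L M (\<lambda>\<omega>. (\<mu> - X i \<omega>)\<^sup>2) = integral\<^sup>L M (\<lambda>\<omega>. (\<mu> - X 0 \<omega>)\<^sup>2)"
    by (rule transfer_integral[of "\<lambda>x. (\<mu> - x)\<^sup>2"]) measurable
  also have "\<dots> = variance (X 0)" unfolding mu by (simp add: power2_commute)
  finally show ?thesis .
qed

end



context iid begin

theorem main:
  assumes N: "N \<ge> 1" and mu0: "expectation (X 0) \<ge> 0" and vpos: "variance (X 0) > 0"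
    and dpos: "prob {\<omega>\<in>space M. X 0 \<omega> \<ge> 1} > 0"
  shows "prob {\<omega>\<in>space M. \<forall>k\<in>{1..N}. (\<Sum>i<k. X i \<omega>) \<ge> 0}
     \<le> 4 * sqrt (variance (X 0)) / (prob {\<omega>\<in>space M. X 0 \<omega> \<ge> 1} * sqrt (real N))
       + expectation (X 0) / prob {\<omega>\<in>space M. X 0 \<omega> \<ge> 1}"
proof -
  define \<mu> where "\<mu> = expectation (X 0)"
  define \<sigma>2 where "\<sigma>2 = variance (X 0)"
  define \<delta> where "\<delta> = prob {\<omega>\<in>space M. X 0 \<omega> \<ge> 1}"
  define P where "P = prob {\<omega>\<in>space M. \<forall>k\<in>{1..N}. (\<Sum>i<k. X i \<omega>) \<ge> 0}"
  define a where "a = sqrt \<sigma>2 * sqrt (real N)"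
  have apos: "a > 0" unfolding a_def \<sigma>2_def using vpos N by simp
  define ind where "ind n \<omega> = of_bool (1 \<le> X (n-1) \<omega>) * Q (N-n) (\<lambda>i. X (n+i) \<omega>)" for n \<omega>
  define T where "T \<omega> = (\<Sum>i<N. (\<mu> - X i \<omega>)\<^sup>2 + (2 * (\<Sum>l<i. \<mu> - X l \<omega>) - runmax (\<lambda>k. \<Sum>l<k. \<mu> - X l \<omega>) i) * (\<mu> - X i \<omega>))" for \<omega>
  have path: "(\<Sum>n\<in>{1..N}. ind n \<omega>) \<le> (\<Sum>i<N. X i \<omega>) + a + T \<omega> / a" for \<omega>
  proof -
    let ?y = "\<lambda>k. \<Sum>l<k. \<mu> - X l \<omega>"
    have c: "- (\<Sum>i<k. X i \<omega>) \<le> runmax ?y N" if "k \<le> N" for k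
    proof -
      have "?y k = real k * \<mu> - (\<Sum>i<k. X i \<omega>)" by (simp add: sum_subtractf)
      moreover have "real k * \<mu> \<ge> 0" using mu0 \<mu>_def by simp
      moreover have "?y k \<le> runmax ?y N" by (rule runmax_ge[OF that])
      ultimately show ?thesis by linarith
    qed
    have "(\<Sum>n\<in>{1..N}. ind n \<omega>) \<le> (\<Sum>i<N. X i \<omega>) + runmax ?y N"
      using count_path[where z="\<lambda>i. X i \<omega>" and N=N and c="runmax ?y N"] c
      unfolding ind_def Q_def by simp
    moreover have "runmax ?y N \<le> a + T \<omega> / a"
      using max_path[where \<xi>="\<lambda>i. \<mu> - X i \<omega>" and a=a and N=N] apos unfolding T_def by simp
    ultimately show ?thesis by linarith
  qed
  have int_ind: "integrable M (ind n)" for n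
    unfolding ind_def by (rule bounded_integrable) (auto simp: Q_def)
  have int_T: "integrable M T"
    unfolding T_def using int_sq cross_term(1)[OF \<mu>_def] by auto
  have "(\<Sum>n\<in>{1..N}. integral\<^sup>L M (ind n)) = integral\<^sup>L M (\<lambda>\<omega>. \<Sum>n\<in>{1..N}. ind n \<omega>)"
    by (rule Bochner_Integration.integral_sum[symmetric]) (rule int_ind)
  also have "\<dots> \<le> integral\<^sup>L M (\<lambda>\<omega>. (\<Sum>i<N. X i \<omega>) + a + T \<omega> / a)"
    by (rule integral_mono) (use int_ind int_T int_X path in auto)
  also have "\<dots> = (\<Sum>i<N. integral\<^sup>L M (X i)) + a + integral\<^sup>L M T / a"
    using int_T int_X prob_space by simp
  also have "(\<Sum>i<N. integral\<^sup>L M (X i)) = real N * \<mu>"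
  proof -
    have "\<And>i. integral\<^sup>L M (X i) = \<mu>" using transfer_integral[of "\<lambda>x. x"] unfolding \<mu>_def by simp
    then show ?thesis by simp
  qed
  also have "integral\<^sup>L M T = real N * \<sigma>2"
    unfolding T_def using int_sq cross_term[OF \<mu>_def] sq_term[OF \<mu>_def] \<sigma>2_def by simp
  finally have upper: "(\<Sum>n\<in>{1..N}. integral\<^sup>L M (ind n)) \<le> real N * \<mu> + a + real N * \<sigma>2 / a" .
  have PQ: "P = integral\<^sup>L M (\<lambda>\<omega>. Q N (\<lambda>i. X i \<omega>))"
    unfolding P_def Q_def by (rule of_bool_prob[symmetric]) measurable
  have "(\<Sum>n\<in>{1..N}. integral\<^sup>L M (ind n)) \<ge> (\<Sum>n\<in>{1..N}. \<delta> * P)"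
  proof (rule sum_mono)
    fix n assume n: "n \<in> {1..N}"
    have "\<delta> * P \<le> integral\<^sup>L M (\<lambda>\<omega>. ind n \<omega>)"
      using stepA[OF n] unfolding ind_def \<delta>_def PQ by simp
    then show "\<delta> * P \<le> integral\<^sup>L M (ind n)" by simp
  qed
  then have lower: "real N * (\<delta> * P) \<le> real N * \<mu> + a + real N * \<sigma>2 / a"
    using upper by simp
  have "real N * \<sigma>2 / a = a"
    unfolding a_def using vpos N \<sigma>2_def
    by (simp add: field_simps real_sqrt_mult[symmetric])
  then have "real N * (\<delta> * P) \<le> real N * \<mu> + 2 * a" using lower by simp
  then have "\<delta> * P \<le> \<mu> + 2 * a / real N"
    using N by (simp add: field_simps)
  moreover have "2 * a / real N = 2 * sqrt \<sigma>2 / sqrt (real N)"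
  proof -
    have sp: "sqrt (real N) > 0" using N by simp
    have "2 * a / real N = (2 * sqrt \<sigma>2 * sqrt (real N)) / (sqrt (real N) * sqrt (real N))"
      unfolding a_def by simp
    also have "\<dots> = 2 * sqrt \<sigma>2 / sqrt (real N)" using sp by (simp add: field_simps)
    finally show ?thesis .
  qed
  ultimately have "\<delta> * P \<le> \<mu> + 2 * sqrt \<sigma>2 / sqrt (real N)" by simp
  moreover have "2 * sqrt \<sigma>2 / sqrt (real N) \<le> 4 * sqrt \<sigma>2 / sqrt (real N)"
  proof -
    have "sqrt \<sigma>2 \<ge> 0" using vpos \<sigma>2_def by simp
    then show ?thesis by (intro divide_right_mono) auto
  qed
  ultimately have "\<delta> * P \<le> \<mu> + 4 * sqrt \<sigma>2 / sqrt (real N)" by simp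
  then have "P \<le> (\<mu> + 4 * sqrt \<sigma>2 / sqrt (real N)) / \<delta>"
    using dpos unfolding \<delta>_def by (simp add: field_simps)
  then show ?thesis
    unfolding P_def \<mu>_def \<sigma>2_def \<delta>_def by (simp add: add_divide_distrib mult.commute)
qed

end

theorem proposition4p7:
  fixes M :: "'a measure" and X :: "nat \<Rightarrow> 'a \<Rightarrow> real" and N :: nat
  assumes "prob_space M"
    and rv: "\<And>i. X i \<in> borel_measurable M"
    and indep: "prob_space.indep_vars M (\<lambda>_. borel) X UNIV"
    and ident: "\<And>i. distr M borel (X i) = distr M borel (X 0)"
    and sq_int: "integrable M (\<lambda>\<omega>. (X 0 \<omega>)\<^sup>2)"
    and mean_nonneg: "prob_space.expectation M (X 0) \<ge> 0"
    and var_pos: "prob_space.variance M (X 0) > 0"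
    and delta_pos: "prob_space.prob M {\<omega> \<in> space M. X 0 \<omega> \<ge> 1} > 0"
    and "N \<ge> 1"
  shows "prob_space.prob M {\<omega> \<in> space M. \<forall>k\<in>{1..N}. (\<Sum>i<k. X i \<omega>) \<ge> 0}
     \<le> 4 * sqrt (prob_space.variance M (X 0))
           / (prob_space.prob M {\<omega> \<in> space M. X 0 \<omega> \<ge> 1} * sqrt (real N))
       + prob_space.expectation M (X 0) / prob_space.prob M {\<omega> \<in> space M. X 0 \<omega> \<ge> 1}"
proof -
  interpret iid M X
    by (rule iid.intro[OF assms(1)], unfold_locales) (use rv indep ident sq_int in auto)
  show ?thesis by (rule main) (use assms in auto)
qed

end
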